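(* Let $k$ be a field of characteristic $\neq 2$, $\mathcal A=k[t,t^{-1},(1-t)^{-1}]$, $t'=1-t^{-1}$, $t''=(1-t)^{-1}$, $\mathfrak g=\mathfrak{sl}_2(k)\otimes_k\mathcal A$, and let $\tau_1,\tau_2$ and $u_0,u_1,u_2$ be as in the context. Define $\mathfrak t=\{g\in\mathfrak g:\tau_1(g)=g,\ \tau_2(g)=g\}$, $\mathfrak g_0=\{g:\tau_1(g)=g,\ \tau_2(g)=-g\}$, $\mathfrak g_1=\{g:\tau_1(g)=-g,\ \tau_2(g)=g\}$, $\mathfrak g_2=\{g:\tau_1(g)=-g,\ \tau_2(g)=-g\}$. Then $\mathfrak t=0$, $\mathfrak g_0=u_0\mathcal A$, $\mathfrak g_1=u_1\mathcal A$ and $\mathfrak g_2=u_2\mathcal A$.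
   Context: Let $x=\begin{pmatrix}-1&2\\0&1\end{pmatrix}$, $y=\begin{pmatrix}-1&0\\-2&1\end{pmatrix}$, $z=\begin{pmatrix}1&0\\0&-1\end{pmatrix}$. $\tau_1$ is the $\mathcal A$-linear map of $\mathfrak g$ with $\tau_1(x\otimes 1)=-x\otimes 1$, $\tau_1(y\otimes 1)=-(z\otimes t'+x\otimes(t'-1))$, $\tau_1(z\otimes 1)=x\otimes t''+y\otimes(t''-1)$; $\tau_2$ is the $\mathcal A$-linear map with $\tau_2(x\otimes 1)=y\otimes t+z\otimes(t-1)$, $\tau_2(y\otimes 1)=-y\otimes 1$, $\tau_2(z\otimes 1)=-(x\otimes t''+y\otimes(t''-1))$. (These are commuting Lie algebra automorphisms of order $2$, corresponding to the permutations $(12)(30)$ and $(23)(10)$ of the $S_4$-action on the Tetrahedron algebra transported to $\mathfrak g$.) Also $u_0=\tfrac14(z\otimes 1+x\otimes t''+y\otimes(t''-1))$, $u_1=\tfrac14(x\otimes 1+y\otimes t+z\otimes(t-1))$, $u_2=\tfrac14(y\otimes 1+z\otimes t'+x\otimes(t'-1))$. *)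

theory Defs
  imports "HOL-Analysis.Finite_Cartesian_Product"
          "HOL-Computational_Algebra.Polynomial"
          "HOL-Computational_Algebra.Fraction_Field"
begin

type_synonym 'k rf = "'k poly fract"

type_synonym 'k mat2 = "'k rf ^ 2 ^ 2"

definition tvar :: "'k::field rf" where
  "tvar = Fract [:0, 1:] 1"

(* A = k[t, t^{-1}, (1-t)^{-1}] as a subring of k(t): elements p / (t^a (1-t)^b) *)
definition calA :: "'k::field rf set" where
  "calA = {Fract p ([:0, 1:] ^ a * [:1, -1:] ^ b) | p a b. True}"

definition tp :: "'k::field rf" where
  "tp = 1 - inverse tvar"

definition tpp :: "'k::field rf" where
  "tpp = inverse (1 - tvar)"

definition mat2 :: "'a \<Rightarrow> 'a \<Rightarrow> 'a \<Rightarrow> 'a \<Rightarrow> 'a ^ 2 ^ 2" where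
  "mat2 a b c d = (\<chi> i j. if i = 1 then (if j = 1 then a else b) else (if j = 1 then c else d))"

(* scalar multiplication of a matrix by an element of k(t); for a matrix M with
   entries in k and a in A this is M \<otimes> a *)
definition smat :: "'a::times \<Rightarrow> 'a ^ 2 ^ 2 \<Rightarrow> 'a ^ 2 ^ 2" where
  "smat a M = (\<chi> i j. a * M $ i $ j)"

definition xm :: "'k::field mat2" where "xm = mat2 (-1) 2 0 1"
definition ym :: "'k::field mat2" where "ym = mat2 (-1) 0 (-2) 1"
definition zm :: "'k::field mat2" where "zm = mat2 1 0 0 (-1)"

(* g = sl_2(k) \<otimes>_k A, realised as the trace-zero 2x2 matrices with entries in A *)
definition gset :: "'k::field mat2 set" where
  "gset = {M. (\<forall>i j. M $ i $ j \<in> calA) \<and> M $ 1 $ 1 + M $ 2 $ 2 = 0}"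

(* coordinates of M = x\<otimes>cx M + y\<otimes>cy M + z\<otimes>cz M (valid since char k \<noteq> 2) *)
definition cx :: "'k::field mat2 \<Rightarrow> 'k rf" where "cx M = M $ 1 $ 2 / 2"
definition cy :: "'k::field mat2 \<Rightarrow> 'k rf" where "cy M = - (M $ 2 $ 1 / 2)"
definition cz :: "'k::field mat2 \<Rightarrow> 'k rf" where "cz M = M $ 1 $ 1 + cx M + cy M"

(* A-linear extension of the prescribed values on x\<otimes>1, y\<otimes>1, z\<otimes>1 *)
definition tau1 :: "'k::field mat2 \<Rightarrow> 'k mat2" where
  "tau1 M =
     smat (cx M) (- xm)
   + smat (cy M) (- (smat tp zm + smat (tp - 1) xm))
   + smat (cz M) (smat tpp xm + smat (tpp - 1) ym)"

definition tau2 :: "'k::field mat2 \<Rightarrow> 'k mat2" where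
  "tau2 M =
     smat (cx M) (smat tvar ym + smat (tvar - 1) zm)
   + smat (cy M) (- ym)
   + smat (cz M) (- (smat tpp xm + smat (tpp - 1) ym))"

definition u0 :: "'k::field mat2" where
  "u0 = smat (1/4) (zm + smat tpp xm + smat (tpp - 1) ym)"
definition u1 :: "'k::field mat2" where
  "u1 = smat (1/4) (xm + smat tvar ym + smat (tvar - 1) zm)"
definition u2 :: "'k::field mat2" where
  "u2 = smat (1/4) (ym + smat tp zm + smat (tp - 1) xm)"

definition tfix :: "'k::field mat2 set" where "tfix = {g \<in> gset. tau1 g = g \<and> tau2 g = g}"
definition g0 :: "'k::field mat2 set" where "g0 = {g \<in> gset. tau1 g = g \<and> tau2 g = - g}"
definition g1 :: "'k::field mat2 set" where "g1 = {g \<in> gset. tau1 g = - g \<and> tau2 g = g}"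
definition g2 :: "'k::field mat2 set" where "g2 = {g \<in> gset. tau1 g = - g \<and> tau2 g = - g}"

definition spanA :: "'k::field mat2 \<Rightarrow> 'k mat2 set" where
  "spanA u = {smat a u | a. a \<in> calA}"

end

theory Submission
  imports Defs "HOL-Analysis.Cartesian_Space"
begin


lemma den_nz: "([:0, 1:] ^ a * [:1, -1:] ^ b :: 'k::field poly) \<noteq> 0"
  by (simp add: pCons_eq_0_iff)

lemma calA_add: assumes "x \<in> calA" "y \<in> calA" shows "x + y \<in> (calA :: 'k::field rf set)"
proof -
  obtain p a b where x: "x = Fract p ([:0, 1:] ^ a * [:1, -1:] ^ b)" using assms(1) unfolding calA_def by blast
  obtain q c d where y: "y = Fract q ([:0, 1:] ^ c * [:1, -1:] ^ d)" using assms(2) unfolding calA_def by blast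
  have "x + y = Fract (p * ([:0, 1:] ^ c * [:1, -1:] ^ d) + q * ([:0, 1:] ^ a * [:1, -1:] ^ b))
      ([:0, 1:] ^ (a + c) * [:1, -1:] ^ (b + d))"
    unfolding x y by (simp add: den_nz power_add algebra_simps)
  then show ?thesis unfolding calA_def by blast
qed

lemma calA_mult: assumes "x \<in> calA" "y \<in> calA" shows "x * y \<in> (calA :: 'k::field rf set)"
proof -
  obtain p a b where x: "x = Fract p ([:0, 1:] ^ a * [:1, -1:] ^ b)" using assms(1) unfolding calA_def by blast
  obtain q c d where y: "y = Fract q ([:0, 1:] ^ c * [:1, -1:] ^ d)" using assms(2) unfolding calA_def by blast
  have "x * y = Fract (p * q) ([:0, 1:] ^ (a + c) * [:1, -1:] ^ (b + d))"
    unfolding x y by (simp add: power_add algebra_simps)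
  then show ?thesis unfolding calA_def by blast
qed

lemma calA_Fract: "Fract p 1 \<in> (calA :: 'k::field rf set)"
proof -
  have "Fract p 1 = Fract p ([:0, 1:] ^ 0 * [:1, -1:] ^ 0)" by simp
  then show ?thesis unfolding calA_def by blast
qed

lemma calA_minus: assumes "x \<in> calA" shows "- x \<in> (calA :: 'k::field rf set)"
proof -
  have "Fract (-1) 1 = (-1::'k rf)" by (simp add: One_fract_def)
  then have "- x = Fract (-1) 1 * x" by simp
  then show ?thesis using calA_mult[OF calA_Fract assms] by simp
qed

lemma calA_diff: assumes "x \<in> calA" "y \<in> calA" shows "x - y \<in> (calA :: 'k::field rf set)"
  using calA_add[OF assms(1) calA_minus[OF assms(2)]] by simp

lemma calA_0: "0 \<in> (calA :: 'k::field rf set)" using calA_Fract[of 0] by (simp add: Zero_fract_def)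
lemma calA_1: "1 \<in> (calA :: 'k::field rf set)" using calA_Fract[of 1] by (simp add: One_fract_def)
lemma calA_of_nat: "of_nat n \<in> (calA :: 'k::field rf set)" using calA_Fract by (simp add: of_nat_fract)
lemma calA_numeral: "numeral n \<in> (calA :: 'k::field rf set)" using calA_of_nat[of "numeral n"] by simp

lemma calA_tvar: "tvar \<in> (calA :: 'k::field rf set)" unfolding tvar_def by (rule calA_Fract)

lemma calA_inv_tvar: "inverse tvar \<in> (calA :: 'k::field rf set)"
proof -
  have "inverse (tvar::'k rf) = Fract 1 ([:0, 1:] ^ 1 * [:1, -1:] ^ 0)" unfolding tvar_def by simp
  then show ?thesis unfolding calA_def by blast
qed

lemma calA_tpp: "tpp \<in> (calA :: 'k::field rf set)"
proof -
  have "(1 - tvar::'k rf) = Fract [:1, -1:] 1" unfolding tvar_def One_fract_def by (simp add: one_pCons)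
  then have "tpp = (Fract 1 ([:0, 1:] ^ 0 * [:1, -1:] ^ 1) :: 'k rf)" unfolding tpp_def by simp
  then show ?thesis unfolding calA_def by blast
qed

lemma calA_tp: "tp \<in> (calA :: 'k::field rf set)"
  unfolding tp_def by (intro calA_diff calA_1 calA_inv_tvar)

lemma two_nz: assumes "CHAR('k::field) \<noteq> 2" shows "(2::'k) \<noteq> 0"
proof
  assume "(2::'k) = 0"
  then have "(of_nat 2::'k) = 0" by simp
  then have "CHAR('k) dvd 2" using of_nat_eq_0_iff_char_dvd[of 2, where 'a='k] by simp
  moreover have "CHAR('k) \<noteq> 1" by (metis of_nat_1 of_nat_CHAR one_neq_zero)
  moreover have "CHAR('k) \<noteq> 0" using \<open>CHAR('k) dvd 2\<close> by (metis dvd_0_left_iff zero_neq_numeral)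
  moreover have "CHAR('k) \<le> 2" using \<open>CHAR('k) dvd 2\<close> by (simp add: dvd_imp_le)
  ultimately show False using assms by linarith
qed

lemma calA_inv_const: assumes "(c::'k::field) \<noteq> 0" "(x::'k rf) = Fract [:c:] 1"
  shows "inverse x \<in> calA"
proof -
  have "inverse x = Fract [:inverse c:] 1"
    using assms by (simp add: eq_fract)
  then show ?thesis by (simp add: calA_Fract)
qed

lemma rf_two: "(2 :: 'k::field rf) = Fract [:2:] 1"
  by (metis Fract_of_nat_eq of_nat_numeral of_nat_poly pCons_0_0 smult_1_left smult_pCons)

lemma rf_four: "(4 :: 'k::field rf) = Fract [:4:] 1"
  by (metis Fract_of_nat_eq of_nat_numeral of_nat_poly pCons_0_0 smult_1_left smult_pCons)

lemma tvar_nz: "(tvar :: 'k::field rf) \<noteq> 0"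
  unfolding tvar_def Zero_fract_def by (simp add: eq_fract)
lemma tvar_n1: "(tvar :: 'k::field rf) \<noteq> 1"
  unfolding tvar_def One_fract_def by (simp add: eq_fract one_pCons)
lemma two_nz_rf: assumes "CHAR('k::field) \<noteq> 2" shows "(2::'k rf) \<noteq> 0"
  using two_nz[OF assms] unfolding rf_two Zero_fract_def by (simp add: eq_fract)



lemma four_nz_rf: assumes "CHAR('k::field) \<noteq> 2" shows "(4::'k rf) \<noteq> 0"
  using two_nz_rf[OF assms] by (metis mult_2_right no_zero_divisors numeral_Bit0 numeral_One one_add_one)


definition L :: "'k::field rf \<Rightarrow> 'k rf \<Rightarrow> 'k rf \<Rightarrow> 'k mat2" where
  "L a b c = smat a xm + smat b ym + smat c zm"

lemma mat_eq: "(M :: 'a ^ 2 ^ 2) = N \<longleftrightarrow> M$1$1 = N$1$1 \<and> M$1$2 = N$1$2 \<and> M$2$1 = N$2$1 \<and> M$2$2 = N$2$2"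
  by (auto simp: vec_eq_iff forall_2)

lemma mat2_e: "mat2 a b c d $ 1 $ 1 = a" "mat2 a b c d $ 1 $ 2 = b"
  "mat2 a b c d $ 2 $ 1 = c" "mat2 a b c d $ 2 $ 2 = d"
  by (simp_all add: mat2_def)

lemma L_e: "L a b c $ 1 $ 1 = -a - b + c" "L a b c $ 1 $ 2 = 2 * a"
  "L a b c $ 2 $ 1 = -2 * b" "L a b c $ 2 $ 2 = a + b - c"
  by (simp_all add: L_def smat_def xm_def ym_def zm_def mat2_e algebra_simps)

lemma smat_e: "smat s M $ i $ j = s * M $ i $ j" by (simp add: smat_def)

lemma L_inj: assumes "CHAR('k::field) \<noteq> 2"
  shows "(L a b c :: 'k mat2) = L a' b' c' \<longleftrightarrow> a = a' \<and> b = b' \<and> c = c'"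
  using two_nz_rf[OF assms] by (auto simp: mat_eq L_e)

lemma L_coords: assumes "CHAR('k::field) \<noteq> 2"
  shows "cx (L a b c :: 'k mat2) = a" "cy (L a b c :: 'k mat2) = b" "cz (L a b c :: 'k mat2) = c"
  using two_nz_rf[OF assms] by (simp_all add: cx_def cy_def cz_def L_e)

lemma L_decomp: assumes "CHAR('k::field) \<noteq> 2" "(M:: 'k mat2) $ 1 $ 1 + M $ 2 $ 2 = 0"
  shows "M = L (cx M) (cy M) (cz M)"
proof -
  have m: "M$2$2 = - M$1$1" using assms(2) by (simp add: eq_neg_iff_add_eq_0 add.commute)
  show ?thesis using two_nz_rf[OF assms(1)] unfolding mat_eq L_e cx_def cy_def cz_def m
    by simp
qed

lemma L_smat: "smat s (L a b c) = L (s*a) (s*b) (s*c)"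
  by (simp add: mat_eq L_e smat_e algebra_simps)
lemma L_neg: "- L a b c = L (-a) (-b) (-c)"
  by (simp add: mat_eq L_e algebra_simps)
lemma L_zero: "(0 :: 'k::field mat2) = L 0 0 0"
  by (simp add: mat_eq L_e)

lemma tau1_L: assumes "CHAR('k::field) \<noteq> 2"
  shows "tau1 (L a b c :: 'k mat2) = L (-a - b*(tp-1) + c*tpp) (c*(tpp-1)) (-b*tp)"
  unfolding tau1_def L_coords[OF assms]
  by (simp add: mat_eq L_e smat_e xm_def ym_def zm_def mat2_e algebra_simps)

lemma tau2_L: assumes "CHAR('k::field) \<noteq> 2"
  shows "tau2 (L a b c :: 'k mat2) = L (-c*tpp) (a*tvar - b - c*(tpp-1)) (a*(tvar-1))"
  unfolding tau2_def L_coords[OF assms]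
  by (simp add: mat_eq L_e smat_e xm_def ym_def zm_def mat2_e algebra_simps)

lemma sixteen_nz_rf: assumes "CHAR('k::field) \<noteq> 2" shows "(16::'k rf) \<noteq> 0"
proof -
  have "(16::'k rf) = 4 * 4" by simp
  then show ?thesis using four_nz_rf[OF assms] by (metis no_zero_divisors)
qed

lemma sixtyfour_nz_rf: assumes "CHAR('k::field) \<noteq> 2" shows "(64::'k rf) \<noteq> 0"
proof -
  have "(64::'k rf) = 4 * 16" by simp
  then show ?thesis using four_nz_rf[OF assms] sixteen_nz_rf[OF assms] by (metis no_zero_divisors)
qed

lemma u0_L: assumes "CHAR('k::field) \<noteq> 2" shows "(u0::'k mat2) = L (tpp/4) ((tpp-1)/4) (1/4)"
  using four_nz_rf[OF assms] sixteen_nz_rf[OF assms] sixtyfour_nz_rf[OF assms] by (simp add: u0_def mat_eq L_e smat_e xm_def ym_def zm_def mat2_e algebra_simps) (simp add: field_simps)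
lemma u1_L: assumes "CHAR('k::field) \<noteq> 2" shows "(u1::'k mat2) = L (1/4) (tvar/4) ((tvar-1)/4)"
  using four_nz_rf[OF assms] sixteen_nz_rf[OF assms] sixtyfour_nz_rf[OF assms] by (simp add: u1_def mat_eq L_e smat_e xm_def ym_def zm_def mat2_e algebra_simps) (simp add: field_simps)
lemma u2_L: assumes "CHAR('k::field) \<noteq> 2" shows "(u2::'k mat2) = L ((tp-1)/4) (1/4) (tp/4)"
  using four_nz_rf[OF assms] sixteen_nz_rf[OF assms] sixtyfour_nz_rf[OF assms] by (simp add: u2_def mat_eq L_e smat_e xm_def ym_def zm_def mat2_e algebra_simps) (simp add: field_simps)

lemma calA_half: assumes "CHAR('k::field) \<noteq> 2" shows "inverse 2 \<in> (calA :: 'k rf set)"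
  using calA_inv_const[OF two_nz[OF assms] rf_two] .

lemma calA_quarter: assumes "CHAR('k::field) \<noteq> 2" shows "inverse 4 \<in> (calA :: 'k rf set)"
proof -
  have "(4::'k) \<noteq> 0" using two_nz[OF assms] by (metis mult_2_right no_zero_divisors numeral_Bit0 numeral_One one_add_one) 
  from calA_inv_const[OF this rf_four] show ?thesis .
qed

lemma gset_L: assumes "CHAR('k::field) \<noteq> 2"
  shows "(M :: 'k mat2) \<in> gset \<longleftrightarrow> (\<exists>a b c. a \<in> calA \<and> b \<in> calA \<and> c \<in> calA \<and> M = L a b c)"
proof
  assume M: "M \<in> gset"
  have h: "inverse 2 \<in> (calA :: 'k rf set)" using calA_half[OF assms] .
  have e: "M $ i $ j \<in> calA" for i j using M unfolding gset_def by auto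
  have "cx M \<in> calA" unfolding cx_def divide_inverse by (intro calA_mult e h)
  moreover have "cy M \<in> calA" unfolding cy_def divide_inverse by (intro calA_minus calA_mult e h)
  moreover have "cz M \<in> calA" unfolding cz_def using calculation by (intro calA_add e)
  moreover have "M = L (cx M) (cy M) (cz M)" using L_decomp[OF assms] M unfolding gset_def by auto
  ultimately show "\<exists>a b c. a \<in> calA \<and> b \<in> calA \<and> c \<in> calA \<and> M = L a b c" by blast
next
  assume "\<exists>a b c. a \<in> calA \<and> b \<in> calA \<and> c \<in> calA \<and> M = L a b c"
  then obtain a b c where abc: "a \<in> calA" "b \<in> calA" "c \<in> calA" "M = L a b c" by blast
  have "M $ i $ j \<in> calA" for i j
  proof -
    have "i = 1 \<or> i = 2" "j = 1 \<or> j = 2" using exhaust_2 by auto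
    moreover have "-a - b + c \<in> calA" "2 * a \<in> calA" "-2 * b \<in> calA" "a + b - c \<in> calA"
      using abc by (metis calA_add calA_diff calA_minus calA_mult calA_numeral)+
    ultimately show ?thesis using abc(4) by (auto simp: L_e)
  qed
  moreover have "M $ 1 $ 1 + M $ 2 $ 2 = 0" using abc by (simp add: L_e)
  ultimately show "M \<in> gset" unfolding gset_def by blast
qed



lemma tp_eq: "tp = 1 - inverse tvar" by (simp add: tp_def)
lemma tpp_eq: "tpp = inverse (1 - tvar)" by (simp add: tpp_def)

lemma nzs: assumes "CHAR('k::field) \<noteq> 2"
  shows "(tvar::'k rf) \<noteq> 0" "1 - (tvar::'k rf) \<noteq> 0" "(tvar::'k rf) - 1 \<noteq> 0" "(4::'k rf) \<noteq> 0" "(2::'k rf) \<noteq> 0"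
   "4 - (tvar::'k rf) * 4 \<noteq> 0" "(tvar::'k rf) * 4 \<noteq> 0" "(tvar::'k rf) * 4 - 4 \<noteq> 0"
   "2 - (tvar::'k rf) * 2 \<noteq> 0" "(tvar::'k rf) * 2 \<noteq> 0" "(tvar::'k rf) * 2 - 2 \<noteq> 0"
  using tvar_nz tvar_n1 four_nz_rf[OF assms] two_nz_rf[OF assms] by auto

lemma tau1_smat: assumes "CHAR('k::field) \<noteq> 2"
  shows "tau1 (smat s (L a b c) :: 'k mat2) = smat s (tau1 (L a b c))"
  by (simp only: L_smat tau1_L[OF assms]) (simp add: L_smat algebra_simps)
lemma tau2_smat: assumes "CHAR('k::field) \<noteq> 2"
  shows "tau2 (smat s (L a b c) :: 'k mat2) = smat s (tau2 (L a b c))"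
  by (simp only: L_smat tau2_L[OF assms]) (simp add: L_smat algebra_simps)
lemma smat_neg: "smat s (- M) = - smat (s::'a::comm_ring) M"
  by (simp add: mat_eq smat_e)

lemma gset_smat: assumes "CHAR('k::field) \<noteq> 2" "(M::'k mat2) \<in> gset" "s \<in> calA"
  shows "smat s M \<in> gset"
proof -
  obtain a b c where "a \<in> calA" "b \<in> calA" "c \<in> calA" "M = L a b c" using assms(2) gset_L[OF assms(1)] by blast
  then show ?thesis using assms(3) by (simp add: gset_L[OF assms(1)] L_smat) (blast intro: calA_mult)
qed

lemma u_gset: assumes "CHAR('k::field) \<noteq> 2"
  shows "(u0::'k mat2) \<in> gset" "(u1::'k mat2) \<in> gset" "(u2::'k mat2) \<in> gset"
proof -
  note q = calA_quarter[OF assms]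
  show "(u0::'k mat2) \<in> gset" unfolding u0_L[OF assms] gset_L[OF assms] divide_inverse
    using calA_mult[OF calA_tpp q] calA_mult[OF calA_diff[OF calA_tpp calA_1] q] calA_mult[OF calA_1 q] by blast
  show "(u1::'k mat2) \<in> gset" unfolding u1_L[OF assms] gset_L[OF assms] divide_inverse
    using calA_mult[OF calA_tvar q] calA_mult[OF calA_diff[OF calA_tvar calA_1] q] calA_mult[OF calA_1 q] by blast
  show "(u2::'k mat2) \<in> gset" unfolding u2_L[OF assms] gset_L[OF assms] divide_inverse
    using calA_mult[OF calA_tp q] calA_mult[OF calA_diff[OF calA_tp calA_1] q] calA_mult[OF calA_1 q] by blast
qed

lemma u_smat: assumes "CHAR('k::field) \<noteq> 2"
  shows "(u0::'k mat2) = smat (1/4) (L tpp (tpp-1) 1)"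
    "(u1::'k mat2) = smat (1/4) (L 1 tvar (tvar-1))"
    "(u2::'k mat2) = smat (1/4) (L (tp-1) 1 tp)"
  by (simp_all add: u0_L[OF assms] u1_L[OF assms] u2_L[OF assms] L_smat)

lemma v_tau: assumes "CHAR('k::field) \<noteq> 2"
  shows "tau1 (L tpp (tpp-1) 1 :: 'k mat2) = L tpp (tpp-1) 1"
        "tau2 (L tpp (tpp-1) 1 :: 'k mat2) = - L tpp (tpp-1) 1"
        "tau1 (L 1 tvar (tvar-1) :: 'k mat2) = - L 1 tvar (tvar-1)"
        "tau2 (L 1 tvar (tvar-1) :: 'k mat2) = L 1 tvar (tvar-1)"
        "tau1 (L (tp-1) 1 tp :: 'k mat2) = - L (tp-1) 1 tp"
        "tau2 (L (tp-1) 1 tp :: 'k mat2) = - L (tp-1) 1 tp"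
  unfolding tau1_L[OF assms] tau2_L[OF assms] L_inj[OF assms] L_neg
    tp_eq tpp_eq using nzs[OF assms] by (simp_all add: field_simps)

lemma u_tau: assumes "CHAR('k::field) \<noteq> 2"
  shows "tau1 (u0::'k mat2) = u0" "tau2 (u0::'k mat2) = - u0"
        "tau1 (u1::'k mat2) = - u1" "tau2 (u1::'k mat2) = u1"
        "tau1 (u2::'k mat2) = - u2" "tau2 (u2::'k mat2) = - u2"
  unfolding u_smat[OF assms] tau1_smat[OF assms] tau2_smat[OF assms] v_tau[OF assms] smat_neg by simp_all

lemma F_fix:
  fixes t a b c :: "'a::field"
  assumes t0: "t \<noteq> 0" and t1: "t \<noteq> 1" and two: "(2::'a) \<noteq> 0"
  and e1: "-a - b*((1 - inverse t)-1) + c*inverse (1-t) = a"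
  and e2: "c*(inverse (1-t)-1) = b"
  and f3: "a*(t-1) = c"
  shows "a = 0 \<and> b = 0 \<and> c = 0"
proof -
  have t1': "1 - t \<noteq> 0" using t1 by simp
  have b: "b = - a * t" using e2 f3[symmetric] t1' by (simp add: field_simps) (simp add: eq_neg_iff_add_eq_0)
  have "4 * a = 0" using e1 b f3[symmetric] t0 t1' by (simp add: field_simps)
  moreover have "(4::'a) \<noteq> 0" using two by (metis mult_2_right no_zero_divisors numeral_Bit0 numeral_One one_add_one)
  ultimately have "a = 0" by simp
  then show ?thesis using b f3 by simp
qed

lemma A1: assumes "CHAR('k::field) \<noteq> 2" shows "tfix = ({0} :: 'k mat2 set)"
proof -
  note two = two_nz_rf[OF assms]
  note four = four_nz_rf[OF assms]
  note inj = L_inj[OF assms]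
  note t1L = tau1_L[OF assms]
  note t2L = tau2_L[OF assms]
  note gL = gset_L[OF assms]
  note q = calA_quarter[OF assms]
  note ff = tp_eq tpp_eq two four
  have mem: "s * x \<in> calA" if "s \<in> calA" "x \<in> calA" for s x :: "'k rf" using calA_mult that .
  have c4: "4 * c \<in> calA" if "c \<in> calA" for c :: "'k rf" using calA_mult[OF calA_numeral that] .
  show ?thesis
  proof (intro set_eqI iffI)
    fix g :: "'k mat2" assume "g \<in> tfix"
    then have g: "g \<in> gset" "tau1 g = g" "tau2 g = g" unfolding tfix_def by auto
    then obtain a b c where abc: "a \<in> calA" "b \<in> calA" "c \<in> calA" "g = L a b c" using gL by blast
    have "L (-a - b*(tp-1) + c*tpp) (c*(tpp-1)) (-b*tp) = L a b c" using g(2) abc(4) t1L L_neg by metis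
    then have e: "-a - b*(tp-1) + c*tpp = a \<and> c*(tpp-1) = b" unfolding inj by blast
    have "L (-c*tpp) (a*tvar - b - c*(tpp-1)) (a*(tvar-1)) = L a b c" using g(3) abc(4) t2L L_neg by metis
    then have f: "a*(tvar-1) = c" unfolding inj by blast
    have "a = 0 \<and> b = 0 \<and> c = 0"
      using F_fix[OF tvar_nz tvar_n1 two] e[THEN conjunct1] e[THEN conjunct2] f unfolding tp_eq tpp_eq by blast
    then show "g \<in> {0}" using abc(4) L_zero by simp
  next
    fix g :: "'k mat2" assume "g \<in> {0}"
    then have "g = L 0 0 0" using L_zero by simp
    then show "g \<in> tfix" unfolding tfix_def using gL calA_0 t1L t2L by auto
  qed
qed

lemma A2: assumes "CHAR('k::field) \<noteq> 2" shows "g0 = (spanA u0 :: 'k mat2 set)"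
proof -
  note two = two_nz_rf[OF assms]
  note four = four_nz_rf[OF assms]
  note inj = L_inj[OF assms]
  note t1L = tau1_L[OF assms]
  note t2L = tau2_L[OF assms]
  note gL = gset_L[OF assms]
  note q = calA_quarter[OF assms]
  note ff = tp_eq tpp_eq two four
  have mem: "s * x \<in> calA" if "s \<in> calA" "x \<in> calA" for s x :: "'k rf" using calA_mult that .
  have c4: "4 * c \<in> calA" if "c \<in> calA" for c :: "'k rf" using calA_mult[OF calA_numeral that] .
  show ?thesis
  proof (intro set_eqI iffI)
    fix g :: "'k mat2" assume "g \<in> g0"
    then have g: "g \<in> gset" "tau1 g = g" "tau2 g = - g" unfolding g0_def by auto
    then obtain a b c where abc: "a \<in> calA" "b \<in> calA" "c \<in> calA" "g = L a b c" using gL by blast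
    have "L (-a - b*(tp-1) + c*tpp) (c*(tpp-1)) (-b*tp) = L a b c" using g(2) abc(4) t1L L_neg by metis
    then have e: "c*(tpp-1) = b" unfolding inj by blast
    have "L (-c*tpp) (a*tvar - b - c*(tpp-1)) (a*(tvar-1)) = L (-a) (-b) (-c)" using g(3) abc(4) t2L L_neg by metis
    then have f: "-c*tpp = -a" unfolding inj by blast+
    have "g = smat (4*c) u0" using abc(4) e f four
      by (simp add: u0_L[OF assms] L_smat inj)
    then show "g \<in> spanA u0" unfolding spanA_def using c4[OF abc(3)] by blast
  next
    fix g :: "'k mat2" assume "g \<in> spanA u0"
    then obtain s where s: "s \<in> calA" "g = smat s u0" unfolding spanA_def by blast
    obtain a b c where abc: "(u0::'k mat2) = L a b c" using u_gset[OF assms] gL by blast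
    have "g \<in> gset" using s gset_smat[OF assms u_gset(1)[OF assms]] gset_smat[OF assms u_gset(2)[OF assms]]
      gset_smat[OF assms u_gset(3)[OF assms]] by blast
    moreover have "tau1 g = g" using s abc u_tau[OF assms] tau1_smat[OF assms] smat_neg by metis
    moreover have "tau2 g = - g" using s abc u_tau[OF assms] tau2_smat[OF assms] smat_neg by metis
    ultimately show "g \<in> g0" unfolding g0_def by blast
  qed
qed

lemma A3: assumes "CHAR('k::field) \<noteq> 2" shows "g1 = (spanA u1 :: 'k mat2 set)"
proof -
  note two = two_nz_rf[OF assms]
  note four = four_nz_rf[OF assms]
  note inj = L_inj[OF assms]
  note t1L = tau1_L[OF assms]
  note t2L = tau2_L[OF assms]
  note gL = gset_L[OF assms]
  note q = calA_quarter[OF assms]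
  note ff = tp_eq tpp_eq two four
  have mem: "s * x \<in> calA" if "s \<in> calA" "x \<in> calA" for s x :: "'k rf" using calA_mult that .
  have c4: "4 * c \<in> calA" if "c \<in> calA" for c :: "'k rf" using calA_mult[OF calA_numeral that] .
  show ?thesis
  proof (intro set_eqI iffI)
    fix g :: "'k mat2" assume "g \<in> g1"
    then have g: "g \<in> gset" "tau1 g = - g" "tau2 g = g" unfolding g1_def by auto
    then obtain a b c where abc: "a \<in> calA" "b \<in> calA" "c \<in> calA" "g = L a b c" using gL by blast
    have "L (-c*tpp) (a*tvar - b - c*(tpp-1)) (a*(tvar-1)) = L a b c" using g(3) abc(4) t2L L_neg by metis
    then have f: "a*tvar - b - c*(tpp-1) = b \<and> a*(tvar-1) = c" unfolding inj by blast
    have k: "(tvar-1)*(tpp-1) = - (tvar::'k rf)" unfolding tpp_eq using nzs[OF assms] by (simp add: field_simps)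
    have f1: "a*tvar - b - c*(tpp-1) = b" and cc: "c = a*(tvar-1)" using f by auto
    have "a*tvar - b - a*((tvar-1)*(tpp-1)) = b" using f1 unfolding cc by (simp add: mult.assoc)
    then have "2 * b = 2 * (a * tvar)" unfolding k by (auto simp: algebra_simps)
    then have "b = a * tvar" using two by simp
    then have "g = smat (4*a) u1" using abc(4) f four
      by (simp add: u1_L[OF assms] L_smat inj)
    then show "g \<in> spanA u1" unfolding spanA_def using c4[OF abc(1)] by blast
  next
    fix g :: "'k mat2" assume "g \<in> spanA u1"
    then obtain s where s: "s \<in> calA" "g = smat s u1" unfolding spanA_def by blast
    obtain a b c where abc: "(u1::'k mat2) = L a b c" using u_gset[OF assms] gL by blast
    have "g \<in> gset" using s gset_smat[OF assms u_gset(1)[OF assms]] gset_smat[OF assms u_gset(2)[OF assms]]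
      gset_smat[OF assms u_gset(3)[OF assms]] by blast
    moreover have "tau1 g = - g" using s abc u_tau[OF assms] tau1_smat[OF assms] smat_neg by metis
    moreover have "tau2 g = g" using s abc u_tau[OF assms] tau2_smat[OF assms] smat_neg by metis
    ultimately show "g \<in> g1" unfolding g1_def by blast
  qed
qed

lemma A4: assumes "CHAR('k::field) \<noteq> 2" shows "g2 = (spanA u2 :: 'k mat2 set)"
proof -
  note two = two_nz_rf[OF assms]
  note four = four_nz_rf[OF assms]
  note inj = L_inj[OF assms]
  note t1L = tau1_L[OF assms]
  note t2L = tau2_L[OF assms]
  note gL = gset_L[OF assms]
  note q = calA_quarter[OF assms]
  note ff = tp_eq tpp_eq two four
  have mem: "s * x \<in> calA" if "s \<in> calA" "x \<in> calA" for s x :: "'k rf" using calA_mult that .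
  have c4: "4 * c \<in> calA" if "c \<in> calA" for c :: "'k rf" using calA_mult[OF calA_numeral that] .
  show ?thesis
  proof (intro set_eqI iffI)
    fix g :: "'k mat2" assume "g \<in> g2"
    then have g: "g \<in> gset" "tau1 g = - g" "tau2 g = - g" unfolding g2_def by auto
    then obtain a b c where abc: "a \<in> calA" "b \<in> calA" "c \<in> calA" "g = L a b c" using gL by blast
    have "L (-a - b*(tp-1) + c*tpp) (c*(tpp-1)) (-b*tp) = L (-a) (-b) (-c)" using g(2) abc(4) t1L L_neg by metis
    then have e: "-b*tp = -c" unfolding inj by blast+
    have "L (-c*tpp) (a*tvar - b - c*(tpp-1)) (a*(tvar-1)) = L (-a) (-b) (-c)" using g(3) abc(4) t2L L_neg by metis
    then have f: "-c*tpp = -a" unfolding inj by blast+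
    have k2: "tp*tpp = tp - (1::'k rf)" unfolding tp_eq tpp_eq using nzs[OF assms] by (simp add: field_simps)
    have cc: "c = b*tp" using e by simp
    have aa: "a = c*tpp" using f by simp
    have "a = b * (tp - 1)" unfolding aa cc k2[symmetric] by (simp add: mult.assoc)
    then have "g = smat (4*b) u2" using abc(4) e f four
      by (simp add: u2_L[OF assms] L_smat inj)
    then show "g \<in> spanA u2" unfolding spanA_def using c4[OF abc(2)] by blast
  next
    fix g :: "'k mat2" assume "g \<in> spanA u2"
    then obtain s where s: "s \<in> calA" "g = smat s u2" unfolding spanA_def by blast
    obtain a b c where abc: "(u2::'k mat2) = L a b c" using u_gset[OF assms] gL by blast
    have "g \<in> gset" using s gset_smat[OF assms u_gset(1)[OF assms]] gset_smat[OF assms u_gset(2)[OF assms]]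
      gset_smat[OF assms u_gset(3)[OF assms]] by blast
    moreover have "tau1 g = - g" using s abc u_tau[OF assms] tau1_smat[OF assms] smat_neg by metis
    moreover have "tau2 g = - g" using s abc u_tau[OF assms] tau2_smat[OF assms] smat_neg by metis
    ultimately show "g \<in> g2" unfolding g2_def by blast
  qed
qed

theorem theorem2p1:
  assumes "CHAR('k::field) \<noteq> 2"
  shows "(tfix :: 'k mat2 set) = {0} \<and>
         (g0 :: 'k mat2 set) = spanA u0 \<and>
         (g1 :: 'k mat2 set) = spanA u1 \<and>
         (g2 :: 'k mat2 set) = spanA u2"
  using A1[OF assms] A2[OF assms] A3[OF assms] A4[OF assms] by blast

end
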